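(* Let $\mu$ be a probability measure on $\mathbb R$ with $\int x\,d\mu=0$, $\int x^2d\mu=1$ and $\int|x|^\alpha d\mu<\infty$ for some $\alpha>3$. Let $(S_n)$ be a random walk started at $0$ with step distribution $\mu$, and $S^*_n=\max_{0\le k\le n}|S_k|$. Then for every $p<\tfrac12$ there is $C_p>0$ such that for all $n\ge1$ and all $M\ge\sqrt n$, $$\mathsf P(S^*_n\ge M)\le C_p\Big(\frac{\sqrt n}{M}e^{-M^2/(18n)}+\frac1{n^p}\Big).$$ *)

theory Defs
  imports "HOL-Probability.Probability"
begin

text \<open>Random walk with step distribution mu, started at 0, realised canonically on the
  finite product space of the first n steps: a point w of this space is the vector of
  steps (w 0, ..., w (n-1)), and S_k = (sum i<k. w i) for 0 <= k <= n.
  rw_max_tail mu n M is P(S*_n >= M) where S*_n = max_{0<=k<=n} |S_k|.\<close>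

definition rw_max_tail :: "real measure \<Rightarrow> nat \<Rightarrow> real \<Rightarrow> real" where
  "rw_max_tail mu n M =
     measure (PiM {..<n} (\<lambda>_. mu))
       {w \<in> space (PiM {..<n} (\<lambda>_. mu)). (MAX k\<in>{0..n}. \<bar>\<Sum>i<k. w i\<bar>) \<ge> M}"

end

theory Submission
  imports Defs
begin


lemma indep_coord:
  fixes mu :: "real measure"
  assumes mu: "prob_space mu" "sets mu = sets borel" and I: "I \<noteq> {}"
    and f: "f \<in> borel_measurable borel"
  shows "prob_space.indep_vars (PiM I (\<lambda>_. mu)) (\<lambda>_. borel) (\<lambda>i w. f (w i)) I"
proof -
  interpret P: prob_space "PiM I (\<lambda>_. mu)" by (rule prob_space_PiM) (use mu in auto)
  have "P.indep_vars (\<lambda>_. mu) (\<lambda>i w. w i) I"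
  proof (subst P.indep_vars_iff_distr_eq_PiM'[OF I])
    show "\<And>i. i \<in> I \<Longrightarrow> (\<lambda>w. w i) \<in> measurable (PiM I (\<lambda>_. mu)) mu" by measurable
    have "distr (PiM I (\<lambda>_. mu)) (PiM I (\<lambda>_. mu)) (\<lambda>x. \<lambda>i\<in>I. x i) = distr (PiM I (\<lambda>_. mu)) (PiM I (\<lambda>_. mu)) (\<lambda>x. x)"
      by (rule distr_cong) (auto simp: space_PiM PiE_def extensional_def restrict_def fun_eq_iff)
    also have "\<dots> = PiM I (\<lambda>_. mu)" by simp
    also have "\<dots> = PiM I (\<lambda>i. distr (PiM I (\<lambda>_. mu)) mu (\<lambda>x. x i))"
      by (rule PiM_cong) (use mu in \<open>auto intro!: distr_PiM_component[symmetric]\<close>)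
    finally show "distr (PiM I (\<lambda>_. mu)) (PiM I (\<lambda>_. mu)) (\<lambda>x. \<lambda>i\<in>I. x i) = PiM I (\<lambda>i. distr (PiM I (\<lambda>_. mu)) mu (\<lambda>x. x i))" .
  qed
  then show ?thesis
    by (rule P.indep_vars_compose2) (use f mu in \<open>auto simp: measurable_def\<close>)
qed

lemma exp_taylor2: "exp (u::real) \<le> 1 + u + u^2/2 * exp \<bar>u\<bar>"
proof -
  obtain t where t: "\<bar>t\<bar> \<le> \<bar>u\<bar>" "exp u = (\<Sum>m<2. (u ^ m) / fact m) + (exp t / fact 2) * u ^ 2"
    using Maclaurin_exp_le[of u 2] by blast
  have "exp t \<le> exp \<bar>u\<bar>" using t(1) by simp
  then have "exp t / 2 * u^2 \<le> exp \<bar>u\<bar> / 2 * u^2" by (intro mult_right_mono) auto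
  then show ?thesis using t(2) by (simp add: numeral_2_eq_2 algebra_simps)
qed

lemma (in prob_space) doob_exp:
  fixes X :: "nat \<Rightarrow> 'a \<Rightarrow> real"
  assumes ind: "indep_vars (\<lambda>_. borel) X {..<n}"
    and rv[measurable]: "\<And>i. X i \<in> borel_measurable M"
    and bnd: "\<And>i \<omega>. i < n \<Longrightarrow> \<omega> \<in> space M \<Longrightarrow> \<bar>X i \<omega>\<bar> \<le> B"
    and mean: "\<And>i. i < n \<Longrightarrow> expectation (X i) = 0"
    and l: "l \<ge> 0"
  shows "exp (l*x) * prob {\<omega>\<in>space M. \<exists>k\<le>n. x \<le> (\<Sum>i<k. X i \<omega>)}
     \<le> expectation (\<lambda>\<omega>. exp (l * (\<Sum>i<n. X i \<omega>)))"
proof -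
  define T where "T k \<omega> = (\<Sum>i<k. X i \<omega>)" for k \<omega>
  define P where "P k \<omega> \<longleftrightarrow> x \<le> T k \<omega> \<and> (\<forall>j<k. T j \<omega> < x)" for k \<omega>
  define F where "F k \<omega> = (if P k \<omega> then exp (l * T k \<omega>) else 0)" for k \<omega>
  define G where "G k \<omega> = exp (l * (\<Sum>i\<in>{k..<n}. X i \<omega>))" for k \<omega>
  have Tm[measurable]: "T k \<in> borel_measurable M" for k unfolding T_def by measurable
  have Pm[measurable]: "Measurable.pred M (P k)" for k unfolding P_def by measurable
  have Fm[measurable]: "F k \<in> borel_measurable M" for k unfolding F_def by measurable
  have Gm[measurable]: "G k \<in> borel_measurable M" for k unfolding G_def by measurable
  have Tb: "\<bar>T k \<omega>\<bar> \<le> real n * \<bar>B\<bar>" if "k \<le> n" "\<omega> \<in> space M" for k \<omega>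
  proof -
    have "\<bar>T k \<omega>\<bar> \<le> (\<Sum>i<k. \<bar>X i \<omega>\<bar>)" unfolding T_def by (rule sum_abs)
    also have "\<dots> \<le> (\<Sum>i<k. \<bar>B\<bar>)" using that by (intro sum_mono) (meson bnd abs_ge_self order_trans lessThan_iff less_le_trans)
    also have "\<dots> \<le> real n * \<bar>B\<bar>" using that by (simp add: mult_right_mono)
    finally show ?thesis .
  qed
  have Xint: "integrable M (X i)" if "i < n" for i
    by (rule integrable_const_bound[where B=B]) (use bnd that in auto)
  have Tint: "integrable M (\<lambda>\<omega>. exp (l * T k \<omega>))" if "k \<le> n" for k
  proof (rule integrable_const_bound[where B="exp (l * (real n * \<bar>B\<bar>))"])
    show "AE \<omega> in M. norm (exp (l * T k \<omega>)) \<le> exp (l * (real n * \<bar>B\<bar>))"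
      using Tb[OF that] l by (auto intro!: mult_left_mono simp: abs_le_iff)
  qed simp
  have Fint: "integrable M (F k)" if "k \<le> n" for k
  proof (rule integrable_const_bound[where B="exp (l * (real n * \<bar>B\<bar>))"])
    show "AE \<omega> in M. norm (F k \<omega>) \<le> exp (l * (real n * \<bar>B\<bar>))"
      using Tb[OF that] l by (auto intro!: mult_left_mono simp: abs_le_iff F_def)
  qed simp
  have Gint: "integrable M (G k)" if "k \<le> n" for k
  proof (rule integrable_const_bound[where B="exp (l * (real n * \<bar>B\<bar>))"])
    show "AE \<omega> in M. norm (G k \<omega>) \<le> exp (l * (real n * \<bar>B\<bar>))"
    proof (intro AE_I2)
      fix \<omega> assume w: "\<omega> \<in> space M"
      have "\<bar>\<Sum>i\<in>{k..<n}. X i \<omega>\<bar> \<le> (\<Sum>i\<in>{k..<n}. \<bar>X i \<omega>\<bar>)" by (rule sum_abs)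
      also have "\<dots> \<le> (\<Sum>i\<in>{k..<n}. \<bar>B\<bar>)" using w by (intro sum_mono) (meson bnd abs_ge_self order_trans atLeastLessThan_iff)
      also have "\<dots> \<le> real n * \<bar>B\<bar>" by (simp add: mult_right_mono)
      finally show "norm (G k \<omega>) \<le> exp (l * (real n * \<bar>B\<bar>))"
        using l by (auto intro!: mult_left_mono simp: abs_le_iff G_def)
    qed
  qed simp
  have EG: "expectation (G k) \<ge> 1" if "k \<le> n" for k
  proof -
    have "expectation (\<lambda>\<omega>. 1 + l * (\<Sum>i\<in>{k..<n}. X i \<omega>)) = 1 + l * (\<Sum>i\<in>{k..<n}. expectation (X i))"
      using Xint by (subst Bochner_Integration.integral_add) (auto simp: prob_space)
    also have "\<dots> = 1" using mean by simp
    finally have "1 = expectation (\<lambda>\<omega>. 1 + l * (\<Sum>i\<in>{k..<n}. X i \<omega>))" by simp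
    also have "\<dots> \<le> expectation (G k)"
      using Xint Gint[OF that] unfolding G_def
      by (intro integral_mono) (auto intro!: Bochner_Integration.integrable_add Bochner_Integration.integrable_sum integrable_mult_right simp: add.commute exp_ge_add_one_self)
    finally show ?thesis .
  qed
  have indFG: "indep_var borel (F k) borel (G k)" if "k \<le> n" for k
  proof -
    define F' where "F' v = (if x \<le> (\<Sum>i<k. v i) \<and> (\<forall>j<k. (\<Sum>i<j. v i) < x) then exp (l * (\<Sum>i<k. v i)) else 0)" for v :: "nat \<Rightarrow> real"
    define G' where "G' v = exp (l * (\<Sum>i\<in>{k..<n}. v i))" for v :: "nat \<Rightarrow> real"
    have F'm: "F' \<in> borel_measurable (PiM {..<k} (\<lambda>_. borel))" unfolding F'_def by measurable
    have G'm: "G' \<in> borel_measurable (PiM {k..<n} (\<lambda>_. borel))" unfolding G'_def by measurable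
    have "indep_var borel (F' \<circ> (\<lambda>\<omega>. restrict (\<lambda>i. X i \<omega>) {..<k})) borel (G' \<circ> (\<lambda>\<omega>. restrict (\<lambda>i. X i \<omega>) {k..<n}))"
      by (rule indep_var_compose[OF indep_var_restrict[OF ind] F'm G'm]) (use that in auto)
    also have "F' \<circ> (\<lambda>\<omega>. restrict (\<lambda>i. X i \<omega>) {..<k}) = F k"
      by (auto simp: fun_eq_iff F_def F'_def P_def T_def)
    also have "G' \<circ> (\<lambda>\<omega>. restrict (\<lambda>i. X i \<omega>) {k..<n}) = G k"
      by (auto simp: fun_eq_iff G_def G'_def)
    finally show ?thesis .
  qed
  have step: "exp (l*x) * prob {\<omega>\<in>space M. P k \<omega>} \<le> expectation (\<lambda>\<omega>. if P k \<omega> then exp (l * T n \<omega>) else 0)" if "k \<le> n" for k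
  proof -
    have "expectation (\<lambda>\<omega>. if P k \<omega> then exp (l*x) else 0) = expectation (\<lambda>\<omega>. exp (l*x) * indicator {\<omega>\<in>space M. P k \<omega>} \<omega>)"
      by (rule Bochner_Integration.integral_cong) (auto simp: indicator_def)
    also have "\<dots> = exp (l*x) * prob {\<omega>\<in>space M. P k \<omega>}" by simp
    finally have "exp (l*x) * prob {\<omega>\<in>space M. P k \<omega>} = expectation (\<lambda>\<omega>. if P k \<omega> then exp (l*x) else 0)" by simp
    also have "\<dots> \<le> expectation (F k)"
    proof -
      have "integrable M (\<lambda>\<omega>. if P k \<omega> then exp (l*x) else 0)"
        by (rule integrable_const_bound[where B="exp (l*x)"]) auto
      then show ?thesis
        using Fint[OF that] by (intro integral_mono) (auto simp: F_def P_def l mult_left_mono)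
    qed
    also have "\<dots> \<le> expectation (F k) * expectation (G k)"
    proof -
      have "expectation (F k) \<ge> 0" by (intro integral_nonneg_AE) (auto simp: F_def)
      then show ?thesis using EG[OF that] by (metis mult_left_mono mult.right_neutral)
    qed
    also have "\<dots> = expectation (\<lambda>\<omega>. F k \<omega> * G k \<omega>)"
      by (rule indep_var_lebesgue_integral[symmetric]) (use indFG Fint Gint that in auto)
    also have "(\<lambda>\<omega>. F k \<omega> * G k \<omega>) = (\<lambda>\<omega>. if P k \<omega> then exp (l * T n \<omega>) else 0)"
    proof
      fix \<omega>
      have "T n \<omega> = T k \<omega> + (\<Sum>i\<in>{k..<n}. X i \<omega>)"
        unfolding T_def using that by (metis sum.atLeastLessThan_concat lessThan_atLeast0 zero_le)
      then show "F k \<omega> * G k \<omega> = (if P k \<omega> then exp (l * T n \<omega>) else 0)"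
        by (simp add: F_def G_def distrib_left exp_add)
    qed
    finally show ?thesis .
  qed
  have disj: "j = k" if "P j \<omega>" "P k \<omega>" for j k \<omega>
    using that unfolding P_def by (metis linorder_neqE_nat not_less)
  have Eeq: "{\<omega>\<in>space M. \<exists>k\<le>n. x \<le> (\<Sum>i<k. X i \<omega>)} = (\<Union>k\<in>{..n}. {\<omega>\<in>space M. P k \<omega>})"
  proof (intro equalityI subsetI)
    fix \<omega> assume "\<omega> \<in> {\<omega>\<in>space M. \<exists>k\<le>n. x \<le> (\<Sum>i<k. X i \<omega>)}"
    then obtain k where k: "\<omega> \<in> space M" "k \<le> n" "x \<le> T k \<omega>" unfolding T_def by auto
    define k0 where "k0 = (LEAST k. x \<le> T k \<omega>)"
    have "x \<le> T k0 \<omega>" unfolding k0_def by (rule LeastI[of _ k]) (use k in auto)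
    moreover have "\<forall>j<k0. T j \<omega> < x" unfolding k0_def using not_less_Least by fastforce
    moreover have "k0 \<le> k" unfolding k0_def by (rule Least_le) (use k in auto)
    ultimately show "\<omega> \<in> (\<Union>k\<in>{..n}. {\<omega>\<in>space M. P k \<omega>})" using k by (auto simp: P_def)
  qed (auto simp: P_def T_def)
  have Hint: "integrable M (\<lambda>\<omega>. if P k \<omega> then exp (l * T n \<omega>) else 0)" for k
  proof (rule integrable_const_bound[where B="exp (l * (real n * \<bar>B\<bar>))"])
    show "AE \<omega> in M. norm (if P k \<omega> then exp (l * T n \<omega>) else 0) \<le> exp (l * (real n * \<bar>B\<bar>))"
      using Tb[of n] l by (auto intro!: mult_left_mono simp: abs_le_iff)
  qed simp
  have "exp (l*x) * prob {\<omega>\<in>space M. \<exists>k\<le>n. x \<le> (\<Sum>i<k. X i \<omega>)}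
      = exp (l*x) * (\<Sum>k\<in>{..n}. prob {\<omega>\<in>space M. P k \<omega>})"
    unfolding Eeq
    by (subst measure_finite_Union) (auto simp: disjoint_family_on_def dest: disj)
  also have "\<dots> = (\<Sum>k\<in>{..n}. exp (l*x) * prob {\<omega>\<in>space M. P k \<omega>})"
    by (simp add: sum_distrib_left)
  also have "\<dots> \<le> (\<Sum>k\<in>{..n}. expectation (\<lambda>\<omega>. if P k \<omega> then exp (l * T n \<omega>) else 0))"
    by (intro sum_mono step) auto
  also have "\<dots> = expectation (\<lambda>\<omega>. \<Sum>k\<in>{..n}. if P k \<omega> then exp (l * T n \<omega>) else 0)"
    by (rule Bochner_Integration.integral_sum[symmetric]) (rule Hint)
  also have "\<dots> \<le> expectation (\<lambda>\<omega>. exp (l * T n \<omega>))"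
  proof (rule integral_mono)
    show "integrable M (\<lambda>\<omega>. \<Sum>k\<in>{..n}. if P k \<omega> then exp (l * T n \<omega>) else 0)"
      by (intro Bochner_Integration.integrable_sum Hint)
    show "integrable M (\<lambda>\<omega>. exp (l * T n \<omega>))" by (rule Tint) simp
    fix \<omega>
    have "(\<Sum>k\<in>{..n}. if P k \<omega> then exp (l * T n \<omega>) else 0) = (\<Sum>k\<in>{k\<in>{..n}. P k \<omega>}. exp (l * T n \<omega>))"
      by (simp add: sum.If_cases Int_def)
    also have "\<dots> = real (card {k\<in>{..n}. P k \<omega>}) * exp (l * T n \<omega>)" by (simp only: sum_constant)
    also have "card {k\<in>{..n}. P k \<omega>} \<le> 1"
      by (subst One_nat_def, subst card_le_Suc0_iff_eq) (auto dest: disj)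
    then have "real (card {k\<in>{..n}. P k \<omega>}) * exp (l * T n \<omega>) \<le> 1 * exp (l * T n \<omega>)"
      by (intro mult_right_mono) auto
    finally show "(\<Sum>k\<in>{..n}. if P k \<omega> then exp (l * T n \<omega>) else 0) \<le> exp (l * T n \<omega>)" by simp
  qed
  finally show ?thesis unfolding T_def .
qed



lemma exp_half_le2: "exp (1/2::real) \<le> 2"
proof (rule ccontr)
  assume "\<not> ?thesis"
  then have "2 * 2 < exp (1/2::real) * exp (1/2)" by (intro mult_strict_mono) auto
  also have "exp (1/2::real) * exp (1/2) = exp 1" by (simp flip: exp_add)
  finally show False using exp_le by simp
qed

lemma (in prob_space) max_tail:
  fixes X :: "nat \<Rightarrow> 'a \<Rightarrow> real"
  assumes ind: "indep_vars (\<lambda>_. borel) X {..<n}"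
    and rv[measurable]: "\<And>i. X i \<in> borel_measurable M"
    and bnd: "\<And>i \<omega>. i < n \<Longrightarrow> \<omega> \<in> space M \<Longrightarrow> \<bar>X i \<omega>\<bar> \<le> B"
    and mean: "\<And>i. i < n \<Longrightarrow> expectation (X i) = 0"
    and var: "\<And>i. i < n \<Longrightarrow> expectation (\<lambda>\<omega>. (X i \<omega>)^2) \<le> 1"
    and l: "l \<ge> 0" "l * B \<le> 1/2"
  shows "prob {\<omega>\<in>space M. \<exists>k\<le>n. x \<le> (\<Sum>i<k. X i \<omega>)} \<le> exp (- l*x + real n * l^2)"
proof -
  have Xint: "integrable M (X i)" if "i < n" for i
  proof (rule integrable_const_bound[where B=B])
    show "AE \<omega> in M. norm (X i \<omega>) \<le> B" using bnd that by (intro AE_I2) auto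
  qed simp
  have X2int: "integrable M (\<lambda>\<omega>. (X i \<omega>)^2)" if "i < n" for i
  proof (rule integrable_const_bound[where B="B^2"])
    show "AE \<omega> in M. norm ((X i \<omega>)^2) \<le> B^2"
    proof (rule AE_I2)
      fix \<omega> assume "\<omega> \<in> space M"
      then have "\<bar>X i \<omega>\<bar> \<le> B" using bnd that by auto
      then have "\<bar>X i \<omega>\<bar>^2 \<le> B^2" by (intro power_mono) auto
      then show "norm ((X i \<omega>)^2) \<le> B^2" by simp
    qed
  qed simp
  have EXint: "integrable M (\<lambda>\<omega>. exp (l * X i \<omega>))" if "i < n" for i
  proof (rule integrable_const_bound[where B="exp (l*B)"])
    show "AE \<omega> in M. norm (exp (l * X i \<omega>)) \<le> exp (l*B)"
      using bnd that l by (auto intro!: mult_left_mono simp: abs_le_iff)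
  qed simp
  have mgf: "expectation (\<lambda>\<omega>. exp (l * X i \<omega>)) \<le> exp (l^2)" if i: "i < n" for i
  proof -
    have pw: "exp (l * X i \<omega>) \<le> 1 + l * X i \<omega> + l^2 * (X i \<omega>)^2" if w: "\<omega> \<in> space M" for \<omega>
    proof -
      have "\<bar>l * X i \<omega>\<bar> \<le> l * B" using bnd[OF i w] l by (simp add: abs_mult mult_left_mono)
      then have "exp \<bar>l * X i \<omega>\<bar> \<le> 2" using l exp_half_le2 by (meson exp_le_cancel_iff order_trans)
      then have "(l * X i \<omega>)^2/2 * exp \<bar>l * X i \<omega>\<bar> \<le> (l * X i \<omega>)^2/2 * 2"
        by (intro mult_left_mono) auto
      with exp_taylor2[of "l * X i \<omega>"] show ?thesis by (simp add: power_mult_distrib)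
    qed
    have "expectation (\<lambda>\<omega>. exp (l * X i \<omega>)) \<le> expectation (\<lambda>\<omega>. 1 + l * X i \<omega> + l^2 * (X i \<omega>)^2)"
      using EXint[OF i] Xint[OF i] X2int[OF i] pw
      by (intro integral_mono) auto
    also have "\<dots> = 1 + l * expectation (X i) + l^2 * expectation (\<lambda>\<omega>. (X i \<omega>)^2)"
      using Xint[OF i] X2int[OF i] by (simp add: prob_space)
    also have "\<dots> \<le> 1 + l^2" using mean[OF i] var[OF i] by (simp add: mult_left_le)
    also have "\<dots> \<le> exp (l^2)" by (rule exp_ge_add_one_self)
    finally show ?thesis .
  qed
  have "expectation (\<lambda>\<omega>. exp (l * (\<Sum>i<n. X i \<omega>))) = expectation (\<lambda>\<omega>. \<Prod>i<n. exp (l * X i \<omega>))"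
    by (simp add: sum_distrib_left exp_sum)
  also have "\<dots> = (\<Prod>i<n. expectation (\<lambda>\<omega>. exp (l * X i \<omega>)))"
  proof (rule indep_vars_lebesgue_integral)
    show "indep_vars (\<lambda>_. borel) (\<lambda>i \<omega>. exp (l * X i \<omega>)) {..<n}"
      by (rule indep_vars_compose2[OF ind, where Y="\<lambda>i v. exp (l * v)"]) simp
  qed (use EXint in auto)
  also have "\<dots> \<le> (\<Prod>i<n. exp (l^2))"
    by (intro prod_mono conjI mgf integral_nonneg_AE) auto
  also have "\<dots> = exp (real n * l^2)" by (simp add: exp_of_nat_mult)
  finally have EE: "expectation (\<lambda>\<omega>. exp (l * (\<Sum>i<n. X i \<omega>))) \<le> exp (real n * l^2)" .
  have "exp (l*x) * prob {\<omega>\<in>space M. \<exists>k\<le>n. x \<le> (\<Sum>i<k. X i \<omega>)} \<le> expectation (\<lambda>\<omega>. exp (l * (\<Sum>i<n. X i \<omega>)))"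
    by (rule doob_exp[OF ind rv, where B=B]) (use bnd mean l in auto)
  with EE have "exp (l*x) * prob {\<omega>\<in>space M. \<exists>k\<le>n. x \<le> (\<Sum>i<k. X i \<omega>)} \<le> exp (real n * l^2)" by linarith
  then have "prob {\<omega>\<in>space M. \<exists>k\<le>n. x \<le> (\<Sum>i<k. X i \<omega>)} \<le> exp (real n * l^2) / exp (l*x)"
    by (simp add: pos_le_divide_eq mult.commute)
  also have "\<dots> = exp (- l*x + real n * l^2)" by (simp add: exp_diff)
  finally show ?thesis .
qed



lemma (in prob_space) max_tail2:
  fixes X :: "nat \<Rightarrow> 'a \<Rightarrow> real" and x B :: real
  assumes ind: "indep_vars (\<lambda>_. borel) X {..<n}"
    and rv[measurable]: "\<And>i. X i \<in> borel_measurable M"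
    and bnd: "\<And>i \<omega>. i < n \<Longrightarrow> \<omega> \<in> space M \<Longrightarrow> \<bar>X i \<omega>\<bar> \<le> B"
    and mean: "\<And>i. i < n \<Longrightarrow> expectation (X i) = 0"
    and var: "\<And>i. i < n \<Longrightarrow> expectation (\<lambda>\<omega>. (X i \<omega>)^2) \<le> 1"
    and B: "B > 0" and n: "n \<ge> 1" and x: "x \<ge> 0"
  shows "prob {\<omega>\<in>space M. \<exists>k\<le>n. x \<le> (\<Sum>i<k. X i \<omega>)} \<le> exp (- (x^2) / (4 * real n)) + exp (- real n / (4 * B^2))"
proof (cases "x * B \<le> real n")
  case True
  define l where "l = x / (2 * real n)"
  have l0: "l \<ge> 0" using x n by (simp add: l_def)
  have lB: "l * B \<le> 1/2" using True n B by (simp add: l_def field_simps)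
  have "prob {\<omega>\<in>space M. \<exists>k\<le>n. x \<le> (\<Sum>i<k. X i \<omega>)} \<le> exp (- l*x + real n * l^2)"
    by (rule max_tail[OF ind rv, where B=B]) (use bnd mean var l0 lB in auto)
  also have "- l*x + real n * l^2 = - (x^2) / (4 * real n)"
    using n by (simp add: l_def field_simps power2_eq_square)
  finally show ?thesis by (smt (verit) exp_gt_zero)
next
  case False
  define l where "l = 1 / (2 * B)"
  have l0: "l \<ge> 0" using B by (simp add: l_def)
  have lB: "l * B \<le> 1/2" using B by (simp add: l_def)
  have "prob {\<omega>\<in>space M. \<exists>k\<le>n. x \<le> (\<Sum>i<k. X i \<omega>)} \<le> exp (- l*x + real n * l^2)"
    by (rule max_tail[OF ind rv, where B=B]) (use bnd mean var l0 lB in auto)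
  also have "- l*x + real n * l^2 \<le> - real n / (4 * B^2)"
  proof -
    have "- l*x + real n * l^2 = (real n - 2 * x * B) / (4 * B^2)"
      using B by (simp add: l_def field_simps power2_eq_square)
    also have "\<dots> \<le> - real n / (4 * B^2)"
      using False B by (intro divide_right_mono) auto
    finally show ?thesis .
  qed
  then have "exp (- l*x + real n * l^2) \<le> exp (- real n / (4 * B^2))" by simp
  finally show ?thesis by (smt (verit) exp_gt_zero)
qed

lemma exp_ge_pow_fact: "(u::real) \<ge> 0 \<Longrightarrow> u^k / fact k \<le> exp u"
proof -
  assume u: "u \<ge> 0"
  obtain t where t: "exp u = (\<Sum>m<Suc k. (u ^ m) / fact m) + (exp t / fact (Suc k)) * u ^ (Suc k)"
    using Maclaurin_exp_le[of u "Suc k"] by blast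
  have "u^k / fact k \<le> (\<Sum>m<Suc k. (u ^ m) / fact m)"
    by (rule member_le_sum[where f="\<lambda>m. u^m / fact m"]) (use u in auto)
  also have "\<dots> \<le> exp u" using t u by simp
  finally show ?thesis .
qed



lemma trunc_facts:
  fixes mu :: "real measure" and y \<alpha> K :: real
  assumes mu: "prob_space mu" "sets mu = sets borel"
    and i1: "integrable mu (\<lambda>x. x)" and e1: "(\<integral>x. x \<partial>mu) = 0"
    and i2: "integrable mu (\<lambda>x. x ^ 2)" and e2: "(\<integral>x. x ^ 2 \<partial>mu) = 1"
    and ia: "integrable mu (\<lambda>x. \<bar>x\<bar> powr \<alpha>)" and a: "\<alpha> > 1" and y: "y \<ge> 1"
    and K: "K = (\<integral>x. \<bar>x\<bar> powr \<alpha> \<partial>mu)"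
  defines "g \<equiv> \<lambda>x. if \<bar>x\<bar> \<le> y then x else 0"
  defines "m \<equiv> \<integral>x. g x \<partial>mu"
  shows "\<bar>m\<bar> \<le> K * y powr (1-\<alpha>)" "(\<integral>x. g x - m \<partial>mu) = 0" "(\<integral>x. (g x - m)^2 \<partial>mu) \<le> 1"
    "measure mu {x. y < \<bar>x\<bar>} \<le> K / y powr \<alpha>" "K \<ge> 0"
proof -
  interpret mu: prob_space mu by (rule mu)
  note [measurable_cong] = mu(2)
  have sp: "space mu = UNIV" using sets_eq_imp_space_eq[OF mu(2)] by simp
  have gm[measurable]: "g \<in> borel_measurable mu" unfolding g_def by measurable
  have gint: "integrable mu g"
  proof (rule mu.integrable_const_bound[where B=y])
    show "AE x in mu. norm (g x) \<le> y" using y by (intro AE_I2) (auto simp: g_def)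
  qed simp
  have g2int: "integrable mu (\<lambda>x. (g x)^2)"
  proof (rule mu.integrable_const_bound[where B="y^2"])
    show "AE x in mu. norm ((g x)^2) \<le> y^2"
      using y by (intro AE_I2) (auto simp: g_def abs_le_square_iff[symmetric])
  qed simp
  show K0: "K \<ge> 0" unfolding K by (intro integral_nonneg_AE) auto
  have pw: "\<bar>g x - x\<bar> \<le> \<bar>x\<bar> powr \<alpha> * y powr (1-\<alpha>)" for x
  proof (cases "\<bar>x\<bar> \<le> y")
    case True then show ?thesis by (simp add: g_def)
  next
    case False
    then have x0: "\<bar>x\<bar> > 0" using y by auto
    have "\<bar>g x - x\<bar> = \<bar>x\<bar> powr \<alpha> * \<bar>x\<bar> powr (1-\<alpha>)"
      using False x0 by (simp add: g_def flip: powr_add)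
    also have "\<dots> \<le> \<bar>x\<bar> powr \<alpha> * y powr (1-\<alpha>)"
      using False a y by (intro mult_left_mono powr_mono2') auto
    finally show ?thesis .
  qed
  have "m = (\<integral>x. g x - x \<partial>mu)" using gint i1 e1 by (simp add: m_def)
  then have "\<bar>m\<bar> \<le> (\<integral>x. \<bar>g x - x\<bar> \<partial>mu)" by (simp add: integral_abs_bound)
  also have "\<dots> \<le> (\<integral>x. \<bar>x\<bar> powr \<alpha> * y powr (1-\<alpha>) \<partial>mu)"
    using gint i1 ia pw by (intro integral_mono) auto
  also have "\<dots> = K * y powr (1-\<alpha>)" by (simp add: K)
  finally show mb: "\<bar>m\<bar> \<le> K * y powr (1-\<alpha>)" .
  show "(\<integral>x. g x - m \<partial>mu) = 0" using gint by (simp add: m_def mu.prob_space)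
  have "(\<integral>x. (g x - m)^2 \<partial>mu) = (\<integral>x. (g x)^2 - 2 * m * g x + m^2 \<partial>mu)"
    by (rule Bochner_Integration.integral_cong) (auto simp: power2_diff algebra_simps)
  also have "\<dots> = (\<integral>x. (g x)^2 \<partial>mu) - 2 * m * m + m^2"
    using gint g2int by (simp add: m_def mu.prob_space)
  also have "\<dots> \<le> (\<integral>x. (g x)^2 \<partial>mu)" by (simp add: power2_eq_square)
  also have "\<dots> \<le> (\<integral>x. x^2 \<partial>mu)"
    using g2int i2 by (intro integral_mono) (auto simp: g_def)
  finally show "(\<integral>x. (g x - m)^2 \<partial>mu) \<le> 1" using e2 by simp
  have ypos: "y powr \<alpha> > 0" using y by simp
  have "measure mu {x. y < \<bar>x\<bar>} = (\<integral>x. indicator {x. y < \<bar>x\<bar>} x \<partial>mu)"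
    by (simp add: sp)
  also have "\<dots> \<le> (\<integral>x. \<bar>x\<bar> powr \<alpha> / y powr \<alpha> \<partial>mu)"
  proof (rule integral_mono)
    show "integrable mu (indicator {x. y < \<bar>x\<bar>} :: real \<Rightarrow> real)"
      by (rule mu.integrable_const_bound[where B=1]) (auto simp: indicator_def)
    show "integrable mu (\<lambda>x. \<bar>x\<bar> powr \<alpha> / y powr \<alpha>)" using ia by simp
    fix x
    show "indicator {x. y < \<bar>x\<bar>} x \<le> \<bar>x\<bar> powr \<alpha> / y powr \<alpha>"
    proof (cases "y < \<bar>x\<bar>")
      case True
      then have "y powr \<alpha> \<le> \<bar>x\<bar> powr \<alpha>" using a y by (intro powr_mono2) auto
      then show ?thesis using True ypos by (simp add: indicator_def)
    qed (simp add: indicator_def)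
  qed
  also have "\<dots> = K / y powr \<alpha>" by (simp add: K)
  finally show "measure mu {x. y < \<bar>x\<bar>} \<le> K / y powr \<alpha>" .
qed



lemma walk_bound:
  fixes mu :: "real measure" and y \<alpha> K M x0 :: real and n :: nat
  assumes mu: "prob_space mu" "sets mu = sets borel"
    and i1: "integrable mu (\<lambda>x. x)" and e1: "(\<integral>x. x \<partial>mu) = 0"
    and i2: "integrable mu (\<lambda>x. x ^ 2)" and e2: "(\<integral>x. x ^ 2 \<partial>mu) = 1"
    and ia: "integrable mu (\<lambda>x. \<bar>x\<bar> powr \<alpha>)" and a: "\<alpha> > 1" and y: "y \<ge> 1"
    and K: "K = (\<integral>x. \<bar>x\<bar> powr \<alpha> \<partial>mu)" and n: "n \<ge> 1"
    and x0: "x0 = M - real n * K * y powr (1-\<alpha>)" "x0 \<ge> 0"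
  shows "rw_max_tail mu n M \<le> real n * (K / y powr \<alpha>)
     + 2 * (exp (- (x0^2) / (4 * real n)) + exp (- real n / (4 * ((1+K)*y)^2)))"
proof -
  define g where "g \<equiv> \<lambda>x::real. if \<bar>x\<bar> \<le> y then x else 0"
  define m where "m \<equiv> \<integral>x. g x \<partial>mu"
  define f where "f x = g x - m" for x
  define B where "B = (1+K)*y"
  note TF = trunc_facts[OF mu i1 e1 i2 e2 ia a y K, folded g_def m_def]
  have mb: "\<bar>m\<bar> \<le> K * y powr (1-\<alpha>)" using TF(1) .
  have K0: "K \<ge> 0" using TF(5) .
  have Ef: "(\<integral>x. f x \<partial>mu) = 0" using TF(2) by (simp add: f_def g_def)
  have Ef2: "(\<integral>x. (f x)^2 \<partial>mu) \<le> 1" using TF(3) by (simp add: f_def g_def)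
  have tail: "measure mu {x. y < \<bar>x\<bar>} \<le> K / y powr \<alpha>" using TF(4) .
  have yp1: "y powr (1-\<alpha>) \<le> 1"
    using powr_mono[of "1-\<alpha>" 0 y] a y by simp
  have fb: "\<bar>f x\<bar> \<le> B" for x
  proof -
    have "\<bar>f x\<bar> \<le> \<bar>g x\<bar> + \<bar>m\<bar>" by (simp add: f_def abs_triangle_ineq4)
    also have "\<dots> \<le> y + K"
      using mb K0 yp1 y by (intro add_mono) (auto simp: g_def intro: order_trans[OF _ mult_left_le])
    also have "\<dots> \<le> B" using K0 y by (simp add: B_def algebra_simps mult_le_cancel_left1)
    finally show ?thesis .
  qed
  have B0: "B > 0" using K0 y by (simp add: B_def)
  note [measurable_cong] = mu(2)
  have fm[measurable]: "f \<in> borel_measurable borel" unfolding f_def g_def by measurable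
  define P where "P = PiM {..<n} (\<lambda>_. mu)"
  interpret P: prob_space P unfolding P_def by (rule prob_space_PiM) (use mu in auto)
  define X where "X i w = (if i < n then f (w i) else 0)" for i w
  have Xm[measurable]: "X i \<in> borel_measurable P" for i
  proof (cases "i < n")
    case True
    have fmu: "f \<in> borel_measurable mu" using fm measurable_cong_sets[OF mu(2) refl] by simp
    have "(\<lambda>w. f (w i)) \<in> borel_measurable P" unfolding P_def
      by (rule measurable_compose[OF measurable_component_singleton[where M="\<lambda>_. mu" and I="{..<n}" and i=i] fmu]) (use True in auto)
    moreover have "X i = (\<lambda>w. f (w i))" using True by (auto simp: X_def fun_eq_iff)
    ultimately show ?thesis by simp
  next
    case False
    then have "X i = (\<lambda>w. 0)" by (auto simp: X_def fun_eq_iff)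
    then show ?thesis by simp
  qed
  have ind: "P.indep_vars (\<lambda>_. borel) X {..<n}"
  proof -
    have "P.indep_vars (\<lambda>_. borel) (\<lambda>i w. f (w i)) {..<n}"
      unfolding P_def by (rule indep_coord[OF mu _ fm]) (use n in \<open>auto simp: lessThan_empty_iff\<close>)
    then show ?thesis by (subst P.indep_vars_cong[where Y="\<lambda>i w. f (w i)"]) (auto simp: X_def fun_eq_iff)
  qed
  have comp: "P.expectation (\<lambda>w. h (w i)) = (\<integral>x. h x \<partial>mu)" if "i < n" "h \<in> borel_measurable borel" for i and h :: "real \<Rightarrow> real"
  proof -
    have "(\<integral>x. h x \<partial>mu) = (\<integral>x. h x \<partial>distr P mu (\<lambda>w. w i))"
      unfolding P_def using that mu by (subst distr_PiM_component) auto
    also have "\<dots> = P.expectation (\<lambda>w. h (w i))"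
      by (rule integral_distr) (use that in \<open>auto simp: P_def measurable_cong_sets[OF refl mu(2)]\<close>)
    finally show ?thesis by simp
  qed
  have Xi: "X i = (\<lambda>w. f (w i))" if "i < n" for i using that by (auto simp: X_def fun_eq_iff)
  have mean: "P.expectation (X i) = 0" if "i < n" for i
    using comp[OF that fm] Ef that by (simp add: Xi)
  have var: "P.expectation (\<lambda>w. (X i w)^2) \<le> 1" if "i < n" for i
    using comp[OF that, of "\<lambda>x. (f x)^2"] Ef2 that by (simp add: Xi)
  have bnd: "\<bar>X i w\<bar> \<le> B" for i w using fb B0 by (simp add: X_def)
  have P1: "P.prob {w\<in>space P. \<exists>k\<le>n. x0 \<le> (\<Sum>i<k. X i w)} \<le> exp (- (x0^2) / (4 * real n)) + exp (- real n / (4 * B^2))"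
    by (rule P.max_tail2[OF ind Xm]) (use bnd mean var B0 n x0 in auto)
  have P2: "P.prob {w\<in>space P. \<exists>k\<le>n. x0 \<le> (\<Sum>i<k. - X i w)} \<le> exp (- (x0^2) / (4 * real n)) + exp (- real n / (4 * B^2))"
  proof (rule P.max_tail2)
    show "P.indep_vars (\<lambda>_. borel) (\<lambda>i w. - X i w) {..<n}"
      by (rule P.indep_vars_compose2[OF ind, where Y="\<lambda>i v. - v"]) simp
  qed (use bnd mean var B0 n x0 in auto)
  have SU: "{w\<in>space P. y < \<bar>w i\<bar>} \<in> sets P" if "i < n" for i
  proof -
    have "(\<lambda>w. w i) \<in> borel_measurable P" unfolding P_def
      using measurable_component_singleton[where M="\<lambda>_. mu" and I="{..<n}" and i=i] that
        measurable_cong_sets[OF refl mu(2)] by auto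
    then show ?thesis by measurable
  qed
  have SUU: "(\<Union>i\<in>{..<n}. {w\<in>space P. y < \<bar>w i\<bar>}) \<in> sets P"
    using SU by (intro sets.finite_UN) auto
  have S1: "{w\<in>space P. \<exists>k\<le>n. x0 \<le> (\<Sum>i<k. X i w)} \<in> sets P" by measurable
  have S2: "{w\<in>space P. \<exists>k\<le>n. x0 \<le> (\<Sum>i<k. - X i w)} \<in> sets P" by measurable
  have PU: "P.prob (\<Union>i\<in>{..<n}. {w\<in>space P. y < \<bar>w i\<bar>}) \<le> real n * (K / y powr \<alpha>)"
  proof -
    have "P.prob (\<Union>i\<in>{..<n}. {w\<in>space P. y < \<bar>w i\<bar>}) \<le> (\<Sum>i<n. P.prob {w\<in>space P. y < \<bar>w i\<bar>})"
      by (rule measure_UNION_le) (use SU in auto)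
    also have "\<dots> \<le> (\<Sum>i<n. K / y powr \<alpha>)"
    proof (intro sum_mono)
      fix i assume "i \<in> {..<n}"
      then have i: "i < n" by simp
      have S: "{x::real. y < \<bar>x\<bar>} \<in> sets mu"
      proof -
        have "{x\<in>space borel. y < \<bar>x::real\<bar>} \<in> sets borel" by measurable
        then show ?thesis using mu(2) by simp
      qed
      have "P.prob {w\<in>space P. y < \<bar>w i\<bar>} = measure (distr P mu (\<lambda>w. w i)) {x. y < \<bar>x\<bar>}"
        by (subst measure_distr) (use i S in \<open>auto simp: P_def intro!: arg_cong[where f="measure (PiM {..<n} (\<lambda>_. mu))"]\<close>)
      also have "\<dots> = measure mu {x. y < \<bar>x\<bar>}"
        unfolding P_def using i mu by (subst distr_PiM_component) auto
      finally show "P.prob {w\<in>space P. y < \<bar>w i\<bar>} \<le> K / y powr \<alpha>" using tail by simp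
    qed
    finally show ?thesis by simp
  qed
  have incl: "{w\<in>space P. M \<le> (MAX k\<in>{0..n}. \<bar>\<Sum>i<k. w i\<bar>)} \<subseteq>
      (\<Union>i\<in>{..<n}. {w\<in>space P. y < \<bar>w i\<bar>}) \<union> {w\<in>space P. \<exists>k\<le>n. x0 \<le> (\<Sum>i<k. X i w)}
      \<union> {w\<in>space P. \<exists>k\<le>n. x0 \<le> (\<Sum>i<k. - X i w)}"
  proof
    fix w assume w: "w \<in> {w\<in>space P. M \<le> (MAX k\<in>{0..n}. \<bar>\<Sum>i<k. w i\<bar>)}"
    then obtain k where k: "k \<le> n" "M \<le> \<bar>\<Sum>i<k. w i\<bar>"
      by (auto simp: Max_ge_iff)
    show "w \<in> (\<Union>i\<in>{..<n}. {w\<in>space P. y < \<bar>w i\<bar>}) \<union> {w\<in>space P. \<exists>k\<le>n. x0 \<le> (\<Sum>i<k. X i w)}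
      \<union> {w\<in>space P. \<exists>k\<le>n. x0 \<le> (\<Sum>i<k. - X i w)}"
    proof (cases "\<exists>i<n. y < \<bar>w i\<bar>")
      case True then show ?thesis using w by auto
    next
      case False
      have "(\<Sum>i<k. w i) = (\<Sum>i<k. X i w + m)"
      proof (intro sum.cong refl)
        fix i assume "i \<in> {..<k}"
        then have i: "i < n" using k(1) by auto
        then have "\<bar>w i\<bar> \<le> y" using False by auto
        then show "w i = X i w + m" using i by (simp add: X_def f_def g_def)
      qed
      also have "\<dots> = (\<Sum>i<k. X i w) + real k * m" by (simp add: sum.distrib)
      finally have eq: "(\<Sum>i<k. w i) = (\<Sum>i<k. X i w) + real k * m" .
      have "real k * \<bar>m\<bar> \<le> real n * \<bar>m\<bar>" using k(1) by (intro mult_right_mono) auto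
      also have "\<dots> \<le> real n * (K * y powr (1-\<alpha>))" using mb by (intro mult_left_mono) auto
      finally have km: "\<bar>real k * m\<bar> \<le> real n * K * y powr (1-\<alpha>)" by (simp add: abs_mult)
      show ?thesis
      proof (cases "0 \<le> (\<Sum>i<k. w i)")
        case True
        then have "M \<le> (\<Sum>i<k. w i)" using k(2) by simp
        moreover have "real k * m \<le> real n * K * y powr (1-\<alpha>)" using km by (simp only: abs_le_iff)
        ultimately have "x0 \<le> (\<Sum>i<k. X i w)" using eq x0(1) by linarith
        then show ?thesis using w k(1) by auto
      next
        case False
        then have "M \<le> - (\<Sum>i<k. w i)" using k(2) by simp
        moreover have "- (real k * m) \<le> real n * K * y powr (1-\<alpha>)" using km by (simp only: abs_le_iff)
        ultimately have "x0 \<le> - (\<Sum>i<k. X i w)" using eq x0(1) by linarith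
        then have "x0 \<le> (\<Sum>i<k. - X i w)" by (simp add: sum_negf)
        then show ?thesis using w k(1) by auto
      qed
    qed
  qed
  have "rw_max_tail mu n M = P.prob {w\<in>space P. M \<le> (MAX k\<in>{0..n}. \<bar>\<Sum>i<k. w i\<bar>)}"
    by (simp add: rw_max_tail_def P_def)
  also have "\<dots> \<le> P.prob ((\<Union>i\<in>{..<n}. {w\<in>space P. y < \<bar>w i\<bar>}) \<union> {w\<in>space P. \<exists>k\<le>n. x0 \<le> (\<Sum>i<k. X i w)}
      \<union> {w\<in>space P. \<exists>k\<le>n. x0 \<le> (\<Sum>i<k. - X i w)})"
    by (rule P.finite_measure_mono[OF incl]) (intro sets.Un SUU S1 S2)
  also have "\<dots> \<le> P.prob (\<Union>i\<in>{..<n}. {w\<in>space P. y < \<bar>w i\<bar>}) + P.prob {w\<in>space P. \<exists>k\<le>n. x0 \<le> (\<Sum>i<k. X i w)}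
      + P.prob {w\<in>space P. \<exists>k\<le>n. x0 \<le> (\<Sum>i<k. - X i w)}"
    by (rule order_trans[OF measure_Un_le add_right_mono[OF measure_Un_le]]) (intro sets.Un SUU S1 S2)+
  also have "\<dots> \<le> real n * (K / y powr \<alpha>) + 2 * (exp (- (x0^2) / (4 * real n)) + exp (- real n / (4 * B^2)))"
    using add_mono[OF add_mono[OF PU P1] P2] by simp
  finally show ?thesis by (simp add: B_def)
qed



lemma gauss_cmp:
  fixes M n :: real
  assumes n: "n > 0" and M: "M \<ge> sqrt n"
  shows "exp (- (M^2) / (16*n)) \<le> 36 * (sqrt n / M * exp (- (M^2) / (18*n)))"
proof -
  have sn: "sqrt n > 0" using n by simp
  have Mp: "M > 0" using M sn by linarith
  define t where "t = M / sqrt n"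
  have t1: "t \<ge> 1" using M sn by (simp add: t_def)
  have t2: "M^2 / n = t^2" using n by (simp add: t_def power_divide)
  have e16: "- (M^2) / (16*n) = - (t^2) / 16" using t2 n by (simp add: field_simps)
  have e18: "- (M^2) / (18*n) = - (t^2) / 18" using t2 n by (simp add: field_simps)
  have "0 \<le> (t - 72)^2" by simp
  then have "t \<le> 36 + t^2/144" by (simp add: power2_diff field_simps)
  also have "\<dots> \<le> 36 * (1 + t^2/144)" by simp
  also have "\<dots> \<le> 36 * exp (t^2/144)" by (intro mult_left_mono exp_ge_add_one_self) auto
  finally have "t * exp (- (t^2)/16) \<le> 36 * exp (t^2/144) * exp (- (t^2)/16)"
    by (intro mult_right_mono) auto
  also have "\<dots> = 36 * exp (- (t^2)/18)" by (simp add: mult.assoc flip: exp_add)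
  finally have key: "t * exp (- (t^2)/16) \<le> 36 * exp (- (t^2)/18)" .
  have "exp (- (t^2)/16) = (t * exp (- (t^2)/16)) / t" using t1 by simp
  also have "\<dots> \<le> 36 * exp (- (t^2)/18) / t" using key t1 by (intro divide_right_mono) auto
  also have "\<dots> = 36 * (sqrt n / M * exp (- (t^2)/18))" using sn Mp by (simp add: t_def field_simps)
  finally show ?thesis unfolding e16 e18 .
qed

lemma exp_ge_pow_fact': "(u::real) \<ge> 0 \<Longrightarrow> u^k / fact k \<le> exp u"
proof -
  assume u: "u \<ge> 0"
  obtain t where t: "exp u = (\<Sum>m<Suc k. (u ^ m) / fact m) + (exp t / fact (Suc k)) * u ^ (Suc k)"
    using Maclaurin_exp_le[of u "Suc k"] by blast
  have "u^k / fact k \<le> (\<Sum>m<Suc k. (u ^ m) / fact m)"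
    by (rule member_le_sum[where f="\<lambda>m. u^m / fact m"]) (use u in auto)
  also have "\<dots> \<le> exp u" using t u by simp
  finally show ?thesis .
qed

lemma stretched_exp:
  fixes c \<epsilon> q :: real and n kk :: nat
  assumes n: "n \<ge> 1" and c: "c > 0" and e: "\<epsilon> > 0" and q: "q \<le> real kk * \<epsilon>"
  shows "exp (- (c * real n powr \<epsilon>)) \<le> fact kk / c^kk * (1 / real n powr q)"
proof -
  define u where "u = c * real n powr \<epsilon>"
  have u0: "u > 0" using n c by (simp add: u_def)
  have "c^kk * real n powr q \<le> c^kk * real n powr (real kk * \<epsilon>)"
    using n q c by (intro mult_left_mono powr_mono) auto
  also have "real n powr (real kk * \<epsilon>) = (real n powr \<epsilon>)^kk"
    using n by (simp add: powr_realpow[symmetric] powr_powr mult.commute)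
  also have "c^kk * (real n powr \<epsilon>)^kk = u^kk" by (simp add: u_def power_mult_distrib)
  finally have A: "c^kk * real n powr q \<le> u^kk" .
  have B: "u^kk / fact kk \<le> exp u" using exp_ge_pow_fact'[of u kk] u0 by simp
  have pos: "c^kk * real n powr q > 0" using c n by simp
  have "exp (- u) = 1 / exp u" by (simp add: exp_minus field_simps)
  also have "\<dots> \<le> 1 / (u^kk / fact kk)" using B u0 by (intro divide_left_mono) auto
  also have "\<dots> = fact kk / u^kk" by simp
  also have "\<dots> \<le> fact kk / (c^kk * real n powr q)" using A pos by (intro divide_left_mono) auto
  also have "\<dots> = fact kk / c^kk * (1 / real n powr q)" by simp
  finally show ?thesis by (simp add: u_def)
qed



theorem mainTheorem8:
  fixes mu :: "real measure" and \<alpha> :: real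
  assumes "prob_space mu"
    and "sets mu = sets borel"
    and "integrable mu (\<lambda>x. x)" and "(\<integral>x. x \<partial>mu) = 0"
    and "integrable mu (\<lambda>x. x ^ 2)" and "(\<integral>x. x ^ 2 \<partial>mu) = 1"
    and "\<alpha> > 3" and "integrable mu (\<lambda>x. \<bar>x\<bar> powr \<alpha>)"
  shows "\<forall>p::real. p < 1/2 \<longrightarrow> (\<exists>C>0. \<forall>n::nat. \<forall>M::real. n \<ge> 1 \<longrightarrow> M \<ge> sqrt (real n) \<longrightarrow>
           rw_max_tail mu n M
             \<le> C * (sqrt (real n) / M * exp (- (M ^ 2) / (18 * real n)) + 1 / (real n powr p)))"
proof (intro allI impI)
  fix p :: real assume p: "p < 1/2"
  interpret mu: prob_space mu by (rule assms(1))
  have a3: "\<alpha> > 3" by (rule assms(7))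
  define K where "K = (\<integral>x. \<bar>x\<bar> powr \<alpha> \<partial>mu)"
  have K0: "K \<ge> 0" unfolding K_def by (intro integral_nonneg_AE) auto
  define q where "q = max p 0"
  have q0: "q \<ge> 0" and qh: "q < 1/2" and pq: "p \<le> q" using p by (auto simp: q_def)
  define r where "r = (1+q)/\<alpha>"
  have hq: "r < 1/2" using a3 qh by (simp add: field_simps r_def)
  have ra: "r * \<alpha> = 1 + q" using a3 by (simp add: r_def)
  define \<gamma> where "\<gamma> = (1/2 + r)/2"
  have g1: "\<gamma> < 1/2" using hq by (simp add: \<gamma>_def)
  have g2: "r < \<gamma>" using hq by (simp add: \<gamma>_def)
  have ga: "\<gamma> * \<alpha> > 1 + q" using g2 a3 ra by (metis mult_strict_right_mono less_trans zero_less_numeral numeral_less_iff)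
  have "r > 0" using q0 a3 by (simp add: r_def)
  then have g0: "\<gamma> > 0" using g2 by linarith
  define \<delta> where "\<delta> = \<gamma> * (\<alpha> - 1) - 1/2"
  have d0: "\<delta> > 0" using ga g1 q0 by (simp add: \<delta>_def algebra_simps)
  define \<epsilon> where "\<epsilon> = 1 - 2 * \<gamma>"
  have e0: "\<epsilon> > 0" using g1 by (simp add: \<epsilon>_def)
  define c where "c = 1 / (4 * (1+K)^2)"
  have c0: "c > 0" using K0 by (simp add: c_def)
  define kk where "kk = nat \<lceil>q / \<epsilon>\<rceil>"
  have kk: "q \<le> real kk * \<epsilon>"
  proof -
    have "q / \<epsilon> \<le> real kk" unfolding kk_def by linarith
    then show ?thesis using e0 by (simp add: field_simps)
  qed
  define D where "D = fact kk / c^kk"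
  have D0: "D \<ge> 0" using c0 by (simp add: D_def)
  define N where "N = (2*K) powr (q/\<delta>)"
  have N0: "N \<ge> 0" by (simp add: N_def)
  show "\<exists>C>0. \<forall>n::nat. \<forall>M::real. n \<ge> 1 \<longrightarrow> M \<ge> sqrt (real n) \<longrightarrow>
           rw_max_tail mu n M
             \<le> C * (sqrt (real n) / M * exp (- (M ^ 2) / (18 * real n)) + 1 / (real n powr p))"
  proof (intro exI[of _ "K + 72 + 2*D + N + 1"] conjI allI impI)
    show "K + 72 + 2*D + N + 1 > 0" using K0 D0 N0 by simp
    fix n :: nat and M :: real assume n: "n \<ge> 1" and M: "M \<ge> sqrt (real n)"
    define a where "a = sqrt (real n) / M * exp (- (M ^ 2) / (18 * real n))"
    define b where "b = 1 / (real n powr p)"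
    have rn: "real n \<ge> 1" using n by simp
    have sn: "sqrt (real n) \<ge> 1" using rn by simp
    have Mp: "M > 0" using M sn by linarith
    have a0: "a \<ge> 0" using Mp by (simp add: a_def)
    have b0: "b > 0" using rn by (simp add: b_def)
    have bq: "1 / real n powr q \<le> b"
      unfolding b_def using rn pq by (intro divide_left_mono powr_mono) auto
    define y where "y = real n powr \<gamma>"
    have y1: "y \<ge> 1" unfolding y_def using rn g0 by (intro ge_one_powr_ge_zero) auto
    define c0 where "c0 = real n * K * y powr (1-\<alpha>)"
    have c0eq: "c0 = K * real n powr (1/2 - \<delta>)"
    proof -
      have "real n * y powr (1-\<alpha>) = real n powr (1 + \<gamma> * (1-\<alpha>))"
        using rn by (simp add: y_def powr_powr powr_add)
      also have "1 + \<gamma> * (1-\<alpha>) = 1/2 - \<delta>" by (simp add: \<delta>_def algebra_simps)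
      finally show ?thesis by (simp add: c0_def)
    qed
    show "rw_max_tail mu n M \<le> (K + 72 + 2*D + N + 1) * (sqrt (real n) / M * exp (- (M ^ 2) / (18 * real n)) + 1 / (real n powr p))"
    proof (cases "c0 \<le> M/2")
      case True
      define x0 where "x0 = M - c0"
      have x0h: "x0 \<ge> M/2" using True by (simp add: x0_def)
      have WB: "rw_max_tail mu n M \<le> real n * (K / y powr \<alpha>)
         + 2 * (exp (- (x0^2) / (4 * real n)) + exp (- real n / (4 * ((1+K)*y)^2)))"
        by (rule walk_bound[OF assms(1-6,8) _ y1 K_def n]) (use a3 x0h Mp in \<open>auto simp: x0_def c0_def\<close>)
      have T1: "real n * (K / y powr \<alpha>) \<le> K * b"
      proof -
        have "real n / y powr \<alpha> = real n powr (1 - \<gamma> * \<alpha>)"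
          using rn by (simp add: y_def powr_powr powr_diff)
        also have "\<dots> \<le> real n powr (- p)" using rn ga pq by (intro powr_mono) auto
        also have "\<dots> = b" using rn by (simp add: b_def powr_minus_divide)
        finally have "real n / y powr \<alpha> \<le> b" .
        then have "K * (real n / y powr \<alpha>) \<le> K * b" using K0 by (rule mult_left_mono)
        then show ?thesis by (simp add: mult.commute)
      qed
      have T2: "exp (- (x0^2) / (4 * real n)) \<le> 36 * a"
      proof -
        have "(M/2)^2 \<le> x0^2" using x0h Mp by (intro power_mono) auto
        then have "M^2/4 \<le> x0^2" by (simp add: power_divide)
        then have "- (x0^2) / (4 * real n) \<le> - (M^2) / (16 * real n)" using rn by (simp add: field_simps)
        then have "exp (- (x0^2) / (4 * real n)) \<le> exp (- (M^2) / (16 * real n))" by simp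
        also have "\<dots> \<le> 36 * a" unfolding a_def using gauss_cmp[of "real n" M] rn M by simp
        finally show ?thesis .
      qed
      have T3: "exp (- real n / (4 * ((1+K)*y)^2)) \<le> D * b"
      proof -
        have "real n / y^2 = real n powr \<epsilon>"
          using rn by (simp add: y_def powr_powr powr_diff \<epsilon>_def mult.commute flip: powr_realpow)
        moreover have "- real n / (4 * ((1+K)*y)^2) = - (c * (real n / y^2))"
          by (simp add: c_def power_mult_distrib mult.assoc)
        ultimately have "- real n / (4 * ((1+K)*y)^2) = - (c * real n powr \<epsilon>)" by simp
        then have "exp (- real n / (4 * ((1+K)*y)^2)) = exp (- (c * real n powr \<epsilon>))" by simp
        also have "\<dots> \<le> D * (1 / real n powr q)"
          unfolding D_def by (rule stretched_exp[OF n c0 e0 kk])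
        also have "\<dots> \<le> D * b" using bq D0 by (rule mult_left_mono)
        finally show ?thesis .
      qed
      have "rw_max_tail mu n M \<le> K * b + 2 * (36 * a + D * b)"
        using WB add_mono[OF T1 mult_left_mono[OF add_mono[OF T2 T3], of 2]] by simp
      also have "\<dots> \<le> (K + 72 + 2*D + N + 1) * (a + b)"
        using a0 b0 K0 D0 N0 by (simp add: algebra_simps)
      finally show ?thesis unfolding a_def b_def .
    next
      case False
      interpret P: prob_space "PiM {..<n} (\<lambda>_. mu)" by (rule prob_space_PiM) (use assms(1) in auto)
      have le1: "rw_max_tail mu n M \<le> 1" unfolding rw_max_tail_def by (rule P.prob_le_1)
      have "K * real n powr (1/2 - \<delta>) > real n powr (1/2) / 2"
        using False c0eq M rn by (simp add: powr_half_sqrt)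
      then have "K * real n powr (1/2) / real n powr \<delta> > real n powr (1/2) / 2"
        using rn by (simp add: powr_diff)
      then have "K / real n powr \<delta> > 1/2" using rn by (simp add: field_simps)
      then have nd: "real n powr \<delta> < 2 * K" using rn by (simp add: field_simps)
      have "real n powr q = (real n powr \<delta>) powr (q/\<delta>)" using d0 by (simp add: powr_powr)
      also have "\<dots> \<le> N" unfolding N_def using nd q0 d0 by (intro powr_mono2) auto
      finally have nq: "real n powr q \<le> N" .
      have "1 \<le> N * (1 / real n powr q)" using nq rn by (simp add: field_simps)
      also have "\<dots> \<le> N * b" using bq N0 by (rule mult_left_mono)
      finally have "rw_max_tail mu n M \<le> N * b" using le1 by linarith
      also have "\<dots> \<le> (K + 72 + 2*D + N + 1) * (a + b)"
        using a0 b0 K0 D0 N0 by (simp add: algebra_simps)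
      finally show ?thesis unfolding a_def b_def .
    qed
  qed
qed


end
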